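(* Consider the two-slab, three-element (periodic) space-time SBP scheme: unknowns $\boldsymbol\rho^{I},\boldsymbol g^{I}_k,\boldsymbol\rho^{II},\boldsymbol g^{II}_k$ ($k=1,\dots,n_v$) satisfying, for slab I, $$\mathsf D_t\boldsymbol\rho^{I}+\tilde{\mathsf D}_x\langle v\boldsymbol g^{I}\rangle=-\sigma_a\boldsymbol\rho^{I}-\mathsf H_t^{-1}\mathsf t_B\mathsf t_B^\top(\boldsymbol\rho^{I}-\boldsymbol\rho^{I}(0)),$$ $$\mathsf D_t\boldsymbol g^{I}_k+\tfrac{v_k}{\varepsilon}\tilde{\mathsf D}_x\boldsymbol g^{I}_k-\tfrac1\varepsilon\langle v\tilde{\mathsf D}_x\boldsymbol g^{I}\rangle+\tfrac{v_k}{\varepsilon^2}\tilde{\mathsf D}_x\boldsymbol\rho^{I}=-\Big(\tfrac{\sigma_s}{\varepsilon^2}+\sigma_a\Big)\boldsymbol g^{I}_k-\mathsf H_t^{-1}\mathsf t_B\mathsf t_B^\top(\boldsymbol g^{I}_k-\boldsymbol g^{I}_k(0)),$$ and for slab II the same equations with superscript $II$ and with the initial SAT terms replaced by $-\mathsf H_t^{-1}\mathsf t_B(\mathsf t_B^\top\boldsymbol\rho^{II}-\mathsf t_T^\top\boldsymbol\rho^{I})$ and $-\mathsf H_t^{-1}\mathsf t_B(\mathsf t_B^\top\boldsymbol g^{II}_k-\mathsf t_T^\top\boldsymbol g^{I}_k)$; the initial data satisfy $\langle\boldsymbol g^{I}(0)\rangle=0$. Then the scheme is stable: with $M_T=\bar{\boldsymbol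 t}_T\bar{\boldsymbol t}_T^\top\otimes\mathsf I_3\otimes\bar{\mathsf H}_x$ and $M_B=\bar{\boldsymbol t}_B\bar{\boldsymbol t}_B^\top\otimes\mathsf I_3\otimes\bar{\mathsf H}_x$, every solution satisfies $$\tfrac12(\boldsymbol\rho^{II})^\top M_T\boldsymbol\rho^{II}+\tfrac{\varepsilon^2}2\langle(\boldsymbol g^{II})^\top M_T\boldsymbol g^{II}\rangle\le\tfrac12\boldsymbol\rho^{I}(0)^\top M_B\boldsymbol\rho^{I}(0)+\tfrac{\varepsilon^2}2\langle\boldsymbol g^{I}(0)^\top M_B\boldsymbol g^{I}(0)\rangle.$$
   Context: SBP operators: $\bar{\mathsf D}=\bar{\mathsf H}^{-1}\bar{\mathsf Q}$ on nodes $x_0<\dots<x_n$ is a degree-$p$ SBP approximation of $d/dx$ if $\bar{\mathsf D}\boldsymbol x^k=k\boldsymbol x^{k-1}$ for $0\le k\le p$, $\bar{\mathsf H}$ is diagonal symmetric positive definite, and $\bar{\mathsf Q}+\bar{\mathsf Q}^\top=\bar{\mathsf E}=\bar{\boldsymbol t}_R\bar{\boldsymbol t}_R^\top-\bar{\boldsymbol t}_L\bar{\boldsymbol t}_L^\top=\mathrm{diag}(-1,0,\dots,0,1)$, $\bar{\boldsymbol t}_L,\bar{\boldsymbol t}_R$ first/last unit vectors. $\bar{\mathsf D}_x=\bar{\mathsf H}_x^{-1}\bar{\mathsf Q}_x$ on $n_x+1$ spatial nodes per element, $\bar{\mathsf S}_x=\bar{\mathsf Q}_x-\frac12\bar{\mathsf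 E}_x$; $\bar{\mathsf D}_t=\bar{\mathsf H}_t^{-1}\bar{\mathsf Q}_t$ on $n_t+1$ temporal nodes per slab, with first/last unit vectors $\bar{\boldsymbol t}_B,\bar{\boldsymbol t}_T$. $\tilde{\bar{\mathsf D}}^G_x=(\mathsf I_3\otimes\bar{\mathsf H}_x^{-1})\tilde{\bar{\mathsf Q}}^G_x$, with $\tilde{\bar{\mathsf Q}}^G_x$ the $3\times3$ block matrix with diagonal blocks $\bar{\mathsf S}_x$, blocks $(1,2),(2,3),(3,1)$ equal to $\frac12\bar{\boldsymbol t}_R\bar{\boldsymbol t}_L^\top$, blocks $(2,1),(3,2),(1,3)$ equal to $-\frac12\bar{\boldsymbol t}_L\bar{\boldsymbol t}_R^\top$. With identities $\mathsf I_{n_x},\mathsf I_{n_t}$ of sizes $n_x+1,n_t+1$: $\tilde{\mathsf D}_x=\mathsf I_{n_t}\otimes\tilde{\bar{\mathsf D}}^G_x$, $\mathsf D_t=\bar{\mathsf D}_t\otimes\mathsf I_3\otimes\mathsf I_{n_x}$, $\mathsf H_t=\bar{\mathsf H}_t\otimes\mathsf I_3\otimes\mathsf I_{n_x}$, $\mathsf t_B=\bar{\boldsymbol t}_B\otimes\mathsf I_3\otimes\mathsf I_{n_x}$, $\mathsf t_T=\bar{\boldsymbol t}_T\otimes\mathsf I_3\otimes\mathsf I_{n_x}$. Velocity nodes $v_k$, weights $\omega_k$ with $\sum\omega_k=1$, $\sum\omega_kv_k=0$; $\langle\boldsymbol a\rangle=\sum_k\omega_k\boldsymbol a_k$. $\varepsilon>0$,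 $\sigma_s>0$, $\sigma_a\ge0$; $\boldsymbol\rho^{I}(0),\boldsymbol g^{I}_k(0)$ given initial-data vectors. *)

theory Defs
  imports Complex_Main
begin

text \<open>A matrix of size (n+1)x(n+1) is a function nat => nat => real whose
  entries are only used for indices 0..n.  A grid function of slab length (n_t+1),
  three spatial elements and (n_x+1) spatial nodes per element is a function
  u :: nat => nat => nat => real, with u i e j the component at time node i (0..n_t),
  element e (0..2) and spatial node j (0..n_x).  This is exactly the index ordering
  of the Kronecker products (time) x (element, I_3) x (space).\<close>

text \<open>Boundary matrix E = t_R t_R^T - t_L t_L^T on nodes 0..n.\<close>
definition sbp_E :: "nat \<Rightarrow> nat \<Rightarrow> nat \<Rightarrow> real" where
  "sbp_E n i j = (if i = n \<and> j = n then 1 else 0) - (if i = 0 \<and> j = 0 then 1 else 0)"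

definition sbpD :: "(nat \<Rightarrow> nat \<Rightarrow> real) \<Rightarrow> (nat \<Rightarrow> nat \<Rightarrow> real) \<Rightarrow> nat \<Rightarrow> nat \<Rightarrow> real" where
  "sbpD H Q i j = Q i j / H i i"

definition is_SBP :: "nat \<Rightarrow> (nat \<Rightarrow> real) \<Rightarrow> nat \<Rightarrow> (nat \<Rightarrow> nat \<Rightarrow> real) \<Rightarrow> (nat \<Rightarrow> nat \<Rightarrow> real) \<Rightarrow> bool" where
  "is_SBP n x p H Q \<longleftrightarrow>
     1 \<le> n \<and>
     strict_mono_on {0..n} x \<and>
     (\<forall>i\<le>n. \<forall>j\<le>n. i \<noteq> j \<longrightarrow> H i j = 0) \<and>
     (\<forall>i\<le>n. 0 < H i i) \<and>
     (\<forall>i\<le>n. \<forall>j\<le>n. Q i j + Q j i = sbp_E n i j) \<and>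
     (\<forall>k\<le>p. \<forall>i\<le>n. (\<Sum>j\<le>n. sbpD H Q i j * x j ^ k) = of_nat k * x i ^ (k - 1))"

definition sbpS :: "nat \<Rightarrow> (nat \<Rightarrow> nat \<Rightarrow> real) \<Rightarrow> nat \<Rightarrow> nat \<Rightarrow> real" where
  "sbpS n Q i j = Q i j - sbp_E n i j / 2"

text \<open>The 3x3 block matrix tilde Q^G_x, entry ((e,j),(e',j')).\<close>
definition QG :: "nat \<Rightarrow> (nat \<Rightarrow> nat \<Rightarrow> real) \<Rightarrow> nat \<Rightarrow> nat \<Rightarrow> nat \<Rightarrow> nat \<Rightarrow> real" where
  "QG n Q e j e' j' =
     (if e' = e then sbpS n Q j j'
      else if e' = (e + 1) mod 3 then (if j = n \<and> j' = 0 then 1/2 else 0)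
      else if e' = (e + 2) mod 3 then (if j = 0 \<and> j' = n then - 1/2 else 0)
      else 0)"

text \<open>tilde D_x = I_{n_t} (x) (I_3 (x) H_x^{-1}) tilde Q^G_x applied to a grid function.\<close>
definition Dx_op :: "nat \<Rightarrow> (nat \<Rightarrow> nat \<Rightarrow> real) \<Rightarrow> (nat \<Rightarrow> nat \<Rightarrow> real) \<Rightarrow>
    (nat \<Rightarrow> nat \<Rightarrow> nat \<Rightarrow> real) \<Rightarrow> nat \<Rightarrow> nat \<Rightarrow> nat \<Rightarrow> real" where
  "Dx_op nx Hx Qx u i e j = (\<Sum>e'<3. \<Sum>j'\<le>nx. QG nx Qx e j e' j' * u i e' j') / Hx j j"

text \<open>D_t = D_t-bar (x) I_3 (x) I_{n_x} applied to a grid function.\<close>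
definition Dt_op :: "nat \<Rightarrow> (nat \<Rightarrow> nat \<Rightarrow> real) \<Rightarrow> (nat \<Rightarrow> nat \<Rightarrow> real) \<Rightarrow>
    (nat \<Rightarrow> nat \<Rightarrow> nat \<Rightarrow> real) \<Rightarrow> nat \<Rightarrow> nat \<Rightarrow> nat \<Rightarrow> real" where
  "Dt_op nt Ht Qt u i e j = (\<Sum>i'\<le>nt. sbpD Ht Qt i i' * u i' e j)"

text \<open>H_t^{-1} t_B y for a spatial vector y (indexed by element and node), where
  H_t = H_t-bar (x) I_3 (x) I_{n_x} is diagonal and t_B = t_B-bar (x) I_3 (x) I_{n_x}.\<close>
definition satB :: "(nat \<Rightarrow> nat \<Rightarrow> real) \<Rightarrow> (nat \<Rightarrow> nat \<Rightarrow> real) \<Rightarrow> nat \<Rightarrow> nat \<Rightarrow> nat \<Rightarrow> real" where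
  "satB Ht y i e j = (if i = 0 then y e j / Ht 0 0 else 0)"

definition tBT :: "(nat \<Rightarrow> nat \<Rightarrow> nat \<Rightarrow> real) \<Rightarrow> nat \<Rightarrow> nat \<Rightarrow> real" where
  "tBT u e j = u 0 e j"
definition tTT :: "nat \<Rightarrow> (nat \<Rightarrow> nat \<Rightarrow> nat \<Rightarrow> real) \<Rightarrow> nat \<Rightarrow> nat \<Rightarrow> real" where
  "tTT nt u e j = u nt e j"

text \<open>u^T M u with M = t t^T (x) I_3 (x) H_x-bar, where t is the unit vector of time node i0
  (i0 = n_t gives M_T, i0 = 0 gives M_B).\<close>
definition quadM :: "nat \<Rightarrow> (nat \<Rightarrow> nat \<Rightarrow> real) \<Rightarrow> nat \<Rightarrow> (nat \<Rightarrow> nat \<Rightarrow> nat \<Rightarrow> real) \<Rightarrow> real" where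
  "quadM nx Hx i0 u = (\<Sum>e<3. \<Sum>j\<le>nx. \<Sum>j'\<le>nx. u i0 e j * Hx j j' * u i0 e j')"

definition vavg :: "nat \<Rightarrow> (nat \<Rightarrow> real) \<Rightarrow> (nat \<Rightarrow> real) \<Rightarrow> real" where
  "vavg nv \<omega> a = (\<Sum>k=1..nv. \<omega> k * a k)"

end

theory Submission
  imports Defs
begin

lemma E_quad:
  fixes a :: "nat \<Rightarrow> real"
  shows "(\<Sum>i\<le>n. \<Sum>i'\<le>n. a i * sbp_E n i i' * a i') = (a n)^2 - (a 0)^2"
proof -
  have "\<And>i i'. a i * sbp_E n i i' * a i' = (if i = n then (if i' = n then a n * a n else 0) else 0) - (if i = 0 then (if i' = 0 then a 0 * a 0 else 0) else 0)"
    by (auto simp: sbp_E_def)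
  moreover have "\<And>m y. m \<le> n \<Longrightarrow> (\<Sum>i\<le>n. \<Sum>i'\<le>n. if i = m then if i' = m then y else 0 else (0::real)) = y"
  proof -
    fix m y assume "m \<le> n"
    have "(\<Sum>i\<le>n. \<Sum>i'\<le>n. if i = m then if i' = m then y else 0 else (0::real)) = (\<Sum>i\<le>n. if i = m then y else 0)"
      using \<open>m \<le> n\<close> by (intro sum.cong refl) auto
    then show "(\<Sum>i\<le>n. \<Sum>i'\<le>n. if i = m then if i' = m then y else 0 else (0::real)) = y"
      using \<open>m \<le> n\<close> by simp
  qed
  ultimately show ?thesis by (simp add: sum_subtractf power2_eq_square)
qed

lemma time_quad:
  assumes S: "is_SBP n x p H Q"
  shows "(\<Sum>i\<le>n. H i i * a i * (\<Sum>i'\<le>n. sbpD H Q i i' * a i')) = ((a n)^2 - (a 0)^2) / 2"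
proof -
  have Hp: "\<And>i. i \<le> n \<Longrightarrow> 0 < H i i" using S unfolding is_SBP_def by auto
  have QE: "\<And>i j. i \<le> n \<Longrightarrow> j \<le> n \<Longrightarrow> Q i j + Q j i = sbp_E n i j" using S unfolding is_SBP_def by auto
  define s where "s = (\<Sum>i\<le>n. \<Sum>i'\<le>n. a i * Q i i' * a i')"
  have 1: "(\<Sum>i\<le>n. H i i * a i * (\<Sum>i'\<le>n. sbpD H Q i i' * a i')) = s"
    unfolding s_def sbpD_def
  proof (intro sum.cong refl)
    fix i assume "i \<in> {..n}"
    then have "H i i \<noteq> 0" using Hp by force
    then show "H i i * a i * (\<Sum>i'\<le>n. Q i i' / H i i * a i') = (\<Sum>i'\<le>n. a i * Q i i' * a i')"
      by (simp add: sum_distrib_left mult.assoc)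
  qed
  have 2: "s = (\<Sum>i\<le>n. \<Sum>i'\<le>n. a i' * Q i' i * a i)"
    unfolding s_def by (rule sum.swap)
  have "2 * s = (\<Sum>i\<le>n. \<Sum>i'\<le>n. a i * Q i i' * a i' + a i' * Q i' i * a i)"
    using 2 by (simp add: s_def sum.distrib)
  also have "\<dots> = (\<Sum>i\<le>n. \<Sum>i'\<le>n. a i * sbp_E n i i' * a i')"
  proof (intro sum.cong refl)
    fix i i' assume "i \<in> {..n}" "i' \<in> {..n}"
    then have "sbp_E n i i' = Q i i' + Q i' i" using QE by simp
    then show "a i * Q i i' * a i' + a i' * Q i' i * a i = a i * sbp_E n i i' * a i'"
      by (simp add: algebra_simps)
  qed
  finally show ?thesis using E_quad 1 by simp
qed

lemma zero_lemma:
  fixes a :: "nat \<Rightarrow> real"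
  assumes S: "is_SBP n x p H Q" and c: "0 < c"
    and eq: "\<forall>i\<le>n. (\<Sum>i'\<le>n. sbpD H Q i i' * a i') = - c * a i - (if i = 0 then a 0 / H 0 0 else 0)"
  shows "\<forall>i\<le>n. a i = 0"
proof -
  have Hp: "\<And>i. i \<le> n \<Longrightarrow> 0 < H i i" using S unfolding is_SBP_def by auto
  have "(\<Sum>i\<le>n. H i i * a i * (\<Sum>i'\<le>n. sbpD H Q i i' * a i'))
      = (\<Sum>i\<le>n. - c * (H i i * (a i)^2) - (if i = 0 then (a 0)^2 else 0))"
  proof (intro sum.cong refl)
    fix i assume i: "i \<in> {..n}"
    then have "H i i \<noteq> 0" using Hp by force
    have ei: "(\<Sum>i'\<le>n. sbpD H Q i i' * a i') = - c * a i - (if i = 0 then a 0 / H 0 0 else 0)"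
      using eq i by simp
    show "H i i * a i * (\<Sum>i'\<le>n. sbpD H Q i i' * a i') = - c * (H i i * (a i)^2) - (if i = 0 then (a 0)^2 else 0)"
    proof (cases "i = 0")
      case True
      then show ?thesis unfolding ei using \<open>H i i \<noteq> 0\<close> by (simp add: power2_eq_square field_simps)
    next
      case False
      then show ?thesis unfolding ei using \<open>H i i \<noteq> 0\<close> by (simp add: power2_eq_square field_simps)
    qed
  qed
  also have "\<dots> = - c * (\<Sum>i\<le>n. H i i * (a i)^2) - (a 0)^2"
    by (simp add: sum_subtractf sum_distrib_left)
  finally have eqq: "((a n)^2 - (a 0)^2) / 2 = - c * (\<Sum>i\<le>n. H i i * (a i)^2) - (a 0)^2"
    using time_quad[OF S] by simp
  moreover have nn: "0 \<le> (\<Sum>i\<le>n. H i i * (a i)^2)"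
    by (intro sum_nonneg) (simp add: Hp less_imp_le)
  have "c * (\<Sum>i\<le>n. H i i * (a i)^2) \<le> 0"
  proof -
    have "0 \<le> (a n)^2" "0 \<le> (a 0)^2" by simp_all
    moreover have "- c * (\<Sum>i\<le>n. H i i * (a i)^2) = - (c * (\<Sum>i\<le>n. H i i * (a i)^2))" by simp
    have h: "c * (\<Sum>i\<le>n. H i i * (a i)^2) = - ((a n)^2 + (a 0)^2) / 2" using eqq by (simp add: field_simps)
    have "0 \<le> (a n)^2 + (a 0)^2" by simp
    then show ?thesis unfolding h by simp
  qed
  then have "(\<Sum>i\<le>n. H i i * (a i)^2) = 0" using c nn
    by (simp add: mult_le_0_iff)
  then have "\<forall>i\<in>{..n}. H i i * (a i)^2 = 0"
    by (subst (asm) sum_nonneg_eq_0_iff) (auto simp: Hp less_imp_le)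
  then show ?thesis using Hp by (metis atMost_iff less_irrefl mult_eq_0_iff power_eq_0_iff)
qed


lemma skew_gen:
  fixes u w :: "'a \<Rightarrow> real"
  assumes fin: "finite A" and sk: "\<And>p q. p \<in> A \<Longrightarrow> q \<in> A \<Longrightarrow> K p q = - K q p"
  shows "(\<Sum>p\<in>A. u p * (\<Sum>q\<in>A. K p q * w q)) + (\<Sum>p\<in>A. w p * (\<Sum>q\<in>A. K p q * u q)) = 0"
proof -
  have "(\<Sum>p\<in>A. w p * (\<Sum>q\<in>A. K p q * u q)) = (\<Sum>p\<in>A. \<Sum>q\<in>A. w p * K p q * u q)"
    by (simp add: sum_distrib_left mult.assoc)
  also have "\<dots> = (\<Sum>q\<in>A. \<Sum>p\<in>A. w p * K p q * u q)" by (rule sum.swap)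
  also have "\<dots> = (\<Sum>q\<in>A. \<Sum>p\<in>A. - (u q * K q p * w p))"
  proof (intro sum.cong refl)
    fix q p assume "q \<in> A" "p \<in> A"
    have "K p q = - K q p" using \<open>p \<in> A\<close> \<open>q \<in> A\<close> by (rule sk)
    then show "w p * K p q * u q = - (u q * K q p * w p)" by simp
  qed
  also have "\<dots> = - (\<Sum>p\<in>A. u p * (\<Sum>q\<in>A. K p q * w q))"
    by (simp add: sum_distrib_left sum_negf mult.assoc)
  finally show ?thesis by simp
qed

lemma QG_skew:
  assumes Q: "\<And>i j. i \<le> n \<Longrightarrow> j \<le> n \<Longrightarrow> Qx i j + Qx j i = sbp_E n i j"
    and e: "e < 3" and e': "e' < 3" and j: "j \<le> n" and j': "j' \<le> n"
  shows "QG n Qx e j e' j' = - QG n Qx e' j' e j"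
proof -
  have S: "sbpS n Qx j j' = - sbpS n Qx j' j"
    using Q[OF j j'] Q[OF j' j] unfolding sbpS_def sbp_E_def by auto
  have "e = 0 \<or> e = 1 \<or> e = 2" "e' = 0 \<or> e' = 1 \<or> e' = 2" using e e' by auto
  show ?thesis
  proof (cases "e' = e")
    case True
    have "QG n Qx e j e' j' = sbpS n Qx j j'" "QG n Qx e' j' e j = sbpS n Qx j' j"
      using True by (simp_all add: QG_def)
    then show ?thesis using S by linarith
  next
    case False
    from \<open>e = 0 \<or> e = 1 \<or> e = 2\<close> \<open>e' = 0 \<or> e' = 1 \<or> e' = 2\<close> False
    show ?thesis
      by (elim disjE) (simp_all add: QG_def)
  qed
qed

lemma space_skew:
  assumes S: "is_SBP nx x p Hx Qx"
  shows "(\<Sum>e<3. \<Sum>j\<le>nx. Hx j j * (u i e j * Dx_op nx Hx Qx w i e j))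
       + (\<Sum>e<3. \<Sum>j\<le>nx. Hx j j * (w i e j * Dx_op nx Hx Qx u i e j)) = 0"
proof -
  have Hp: "\<And>i. i \<le> nx \<Longrightarrow> 0 < Hx i i" using S unfolding is_SBP_def by auto
  have QE: "\<And>i j. i \<le> nx \<Longrightarrow> j \<le> nx \<Longrightarrow> Qx i j + Qx j i = sbp_E nx i j" using S unfolding is_SBP_def by auto
  define A where "A = {..<(3::nat)} \<times> {..nx}"
  define K where "K = (\<lambda>p q. QG nx Qx (fst p) (snd p) (fst q) (snd q))"
  have red: "(\<Sum>e<3. \<Sum>j\<le>nx. Hx j j * (a i e j * Dx_op nx Hx Qx b i e j))
      = (\<Sum>p\<in>A. a i (fst p) (snd p) * (\<Sum>q\<in>A. K p q * b i (fst q) (snd q)))" for a b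
  proof -
    have "(\<Sum>e<3. \<Sum>j\<le>nx. Hx j j * (a i e j * Dx_op nx Hx Qx b i e j))
        = (\<Sum>e<3. \<Sum>j\<le>nx. a i e j * (\<Sum>e'<3. \<Sum>j'\<le>nx. QG nx Qx e j e' j' * b i e' j'))"
    proof (intro sum.cong refl)
      fix e j assume "j \<in> {..nx}"
      then have "Hx j j \<noteq> 0" using Hp by force
      then have gen: "Hx j j * (y * (X / Hx j j)) = y * X" for y X :: real by simp
      show "Hx j j * (a i e j * Dx_op nx Hx Qx b i e j) = a i e j * (\<Sum>e'<3. \<Sum>j'\<le>nx. QG nx Qx e j e' j' * b i e' j')"
        unfolding Dx_op_def by (rule gen)
    qed
    also have "\<dots> = (\<Sum>p\<in>A. a i (fst p) (snd p) * (\<Sum>q\<in>A. K p q * b i (fst q) (snd q)))"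
      unfolding A_def K_def sum.cartesian_product by (simp add: case_prod_beta)
    finally show ?thesis .
  qed
  have finA: "finite A" unfolding A_def by simp
  have skK: "K p q = - K q p" if "p \<in> A" "q \<in> A" for p q
  proof -
    obtain e j where p: "p = (e, j)" "e < 3" "j \<le> nx" using \<open>p \<in> A\<close> unfolding A_def by auto
    obtain e' j' where q: "q = (e', j')" "e' < 3" "j' \<le> nx" using \<open>q \<in> A\<close> unfolding A_def by auto
    show ?thesis unfolding K_def p(1) q(1) fst_conv snd_conv by (rule QG_skew[OF QE p(2) q(2) p(3) q(3)])
  qed
  show ?thesis unfolding red by (rule skew_gen[OF finA skK])
qed


definition TT :: "nat \<Rightarrow> nat \<Rightarrow> (nat \<Rightarrow> nat \<Rightarrow> real) \<Rightarrow> (nat \<Rightarrow> nat \<Rightarrow> real) \<Rightarrow> (nat \<Rightarrow> nat \<Rightarrow> nat \<Rightarrow> real) \<Rightarrow> real" where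
  "TT nt nx Ht Hx F = (\<Sum>i\<le>nt. \<Sum>e<3. \<Sum>j\<le>nx. Ht i i * Hx j j * F i e j)"

definition SB :: "nat \<Rightarrow> (nat \<Rightarrow> nat \<Rightarrow> real) \<Rightarrow> (nat \<Rightarrow> nat \<Rightarrow> real) \<Rightarrow> real" where
  "SB nx Hx y = (\<Sum>e<3. \<Sum>j\<le>nx. Hx j j * (y e j)^2)"

lemma TT_cong:
  assumes "\<forall>i\<le>nt. \<forall>e<3. \<forall>j\<le>nx. F i e j = G i e j"
  shows "TT nt nx Ht Hx F = TT nt nx Ht Hx G"
  unfolding TT_def using assms by (intro sum.cong refl) auto

lemma TT_add: "TT nt nx Ht Hx (\<lambda>i e j. F i e j + G i e j) = TT nt nx Ht Hx F + TT nt nx Ht Hx G"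
  unfolding TT_def by (simp add: sum.distrib distrib_left)

lemma TT_diff: "TT nt nx Ht Hx (\<lambda>i e j. F i e j - G i e j) = TT nt nx Ht Hx F - TT nt nx Ht Hx G"
  unfolding TT_def by (simp add: sum_subtractf right_diff_distrib)

lemma TT_cmult: "TT nt nx Ht Hx (\<lambda>i e j. c * F i e j) = c * TT nt nx Ht Hx F"
  unfolding TT_def by (simp add: sum_distrib_left mult_ac)

lemma TT_uminus: "TT nt nx Ht Hx (\<lambda>i e j. - F i e j) = - TT nt nx Ht Hx F"
  unfolding TT_def by (simp add: sum_negf)

lemma TT_zero: "TT nt nx Ht Hx (\<lambda>i e j. 0) = 0"
  unfolding TT_def by simp

lemma TT_sum:
  assumes "finite K"
  shows "TT nt nx Ht Hx (\<lambda>i e j. \<Sum>k\<in>K. F k i e j) = (\<Sum>k\<in>K. TT nt nx Ht Hx (F k))"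
  using assms
proof (induction K rule: finite_induct)
  case empty
  then show ?case using TT_zero by simp
next
  case (insert x K)
  then show ?case using TT_add[of nt nx Ht Hx "F x" "\<lambda>i e j. \<Sum>k\<in>K. F k i e j"] by simp
qed

lemma TT_nonneg:
  assumes "\<forall>i\<le>nt. 0 < Ht i i" "\<forall>j\<le>nx. 0 < Hx j j"
    and "\<forall>i\<le>nt. \<forall>e<3. \<forall>j\<le>nx. 0 \<le> F i e j"
  shows "0 \<le> TT nt nx Ht Hx F"
  unfolding TT_def using assms by (intro sum_nonneg) (simp add: less_imp_le)

lemma swap3:
  "(\<Sum>i\<in>I. \<Sum>e\<in>E. \<Sum>j\<in>J. f i e j) = (\<Sum>e\<in>E. \<Sum>j\<in>J. \<Sum>i\<in>I. (f i e j :: real))"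
proof -
  have "(\<Sum>i\<in>I. \<Sum>e\<in>E. \<Sum>j\<in>J. f i e j) = (\<Sum>e\<in>E. \<Sum>i\<in>I. \<Sum>j\<in>J. f i e j)" by (rule sum.swap)
  also have "\<dots> = (\<Sum>e\<in>E. \<Sum>j\<in>J. \<Sum>i\<in>I. f i e j)" by (intro sum.cong refl) (rule sum.swap)
  finally show ?thesis .
qed

lemma TT_time:
  assumes S: "is_SBP nt x p Ht Qt"
  shows "TT nt nx Ht Hx (\<lambda>i e j. u i e j * Dt_op nt Ht Qt u i e j) = (SB nx Hx (u nt) - SB nx Hx (u 0)) / 2"
proof -
  have "TT nt nx Ht Hx (\<lambda>i e j. u i e j * Dt_op nt Ht Qt u i e j)
      = (\<Sum>e<3. \<Sum>j\<le>nx. \<Sum>i\<le>nt. Ht i i * Hx j j * (u i e j * Dt_op nt Ht Qt u i e j))"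
    unfolding TT_def by (rule swap3)
  also have "\<dots> = (\<Sum>e<3. \<Sum>j\<le>nx. Hx j j * (\<Sum>i\<le>nt. Ht i i * u i e j * (\<Sum>i'\<le>nt. sbpD Ht Qt i i' * u i' e j)))"
    unfolding Dt_op_def by (simp add: sum_distrib_left mult_ac)
  also have "\<dots> = (\<Sum>e<3. \<Sum>j\<le>nx. Hx j j * (((u nt e j)^2 - (u 0 e j)^2) / 2))"
    by (intro sum.cong refl) (simp only: time_quad[OF S])
  also have "\<dots> = (\<Sum>e<3. \<Sum>j\<le>nx. (Hx j j * (u nt e j)^2 - Hx j j * (u 0 e j)^2)) / 2"
    by (simp add: sum_divide_distrib right_diff_distrib)
  also have "\<dots> = (SB nx Hx (u nt) - SB nx Hx (u 0)) / 2"
    unfolding SB_def by (simp only: sum_subtractf)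
  finally show ?thesis .
qed

lemma TT_space:
  assumes S: "is_SBP nx x p Hx Qx"
  shows "TT nt nx Ht Hx (\<lambda>i e j. u i e j * Dx_op nx Hx Qx w i e j)
       + TT nt nx Ht Hx (\<lambda>i e j. w i e j * Dx_op nx Hx Qx u i e j) = 0"
proof -
  have "TT nt nx Ht Hx (\<lambda>i e j. u i e j * Dx_op nx Hx Qx w i e j)
       + TT nt nx Ht Hx (\<lambda>i e j. w i e j * Dx_op nx Hx Qx u i e j)
     = (\<Sum>i\<le>nt. Ht i i * ((\<Sum>e<3. \<Sum>j\<le>nx. Hx j j * (u i e j * Dx_op nx Hx Qx w i e j))
       + (\<Sum>e<3. \<Sum>j\<le>nx. Hx j j * (w i e j * Dx_op nx Hx Qx u i e j))))"
    unfolding TT_def by (simp add: sum.distrib sum_distrib_left distrib_left mult.assoc)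
  also have "\<dots> = 0" using space_skew[OF S] by simp
  finally show ?thesis .
qed

lemma TT_sat:
  assumes "Ht 0 0 \<noteq> 0"
  shows "TT nt nx Ht Hx (\<lambda>i e j. u i e j * satB Ht y i e j) = (\<Sum>e<3. \<Sum>j\<le>nx. Hx j j * (u 0 e j * y e j))"
proof -
  have "(\<Sum>e<3. \<Sum>j\<le>nx. Ht i i * Hx j j * (u i e j * satB Ht y i e j))
      = (if i = 0 then (\<Sum>e<3. \<Sum>j\<le>nx. Hx j j * (u 0 e j * y e j)) else 0)" for i
    using assms by (cases "i = 0") (simp_all add: satB_def)
  then show ?thesis unfolding TT_def by simp
qed

lemma vavg_add: "vavg nv \<omega> (\<lambda>k. f k + g k) = vavg nv \<omega> f + vavg nv \<omega> g"
  unfolding vavg_def by (simp add: sum.distrib distrib_left)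
lemma vavg_diff: "vavg nv \<omega> (\<lambda>k. f k - g k) = vavg nv \<omega> f - vavg nv \<omega> g"
  unfolding vavg_def by (simp add: sum_subtractf right_diff_distrib)
lemma vavg_cmult: "vavg nv \<omega> (\<lambda>k. c * f k) = c * vavg nv \<omega> f"
proof -
  have "(\<Sum>k=1..nv. \<omega> k * (c * f k)) = (\<Sum>k=1..nv. c * (\<omega> k * f k))" by (simp add: mult_ac)
  also have "\<dots> = c * (\<Sum>k=1..nv. \<omega> k * f k)" by (rule sum_distrib_left[symmetric])
  finally show ?thesis unfolding vavg_def .
qed
lemma vavg_uminus: "vavg nv \<omega> (\<lambda>k. - f k) = - vavg nv \<omega> f"
  unfolding vavg_def by (simp add: sum_negf)
lemma vavg_divmult: "vavg nv \<omega> (\<lambda>k. f k / c * g k) = 1 / c * vavg nv \<omega> (\<lambda>k. f k * g k)"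
  unfolding vavg_def by (simp add: sum_distrib_left mult_ac)
lemma vavg_multconst: "vavg nv \<omega> (\<lambda>k. f k * c) = vavg nv \<omega> f * c"
  using vavg_cmult[of nv \<omega> c f] by (simp add: mult.commute)
lemma vavg_const: "vavg nv \<omega> (\<lambda>k. c) = (\<Sum>k=1..nv. \<omega> k) * c"
  unfolding vavg_def by (simp add: sum_distrib_right)
lemma vavg_Dt: "vavg nv \<omega> (\<lambda>k. Dt_op nt Ht Qt (g k) i e j) = Dt_op nt Ht Qt (\<lambda>i e j. vavg nv \<omega> (\<lambda>k. g k i e j)) i e j"
  unfolding vavg_def Dt_op_def sum_distrib_left by (subst sum.swap) (simp add: mult_ac)
lemma vavg_satB: "vavg nv \<omega> (\<lambda>k. satB Ht (y k) i e j) = satB Ht (\<lambda>e j. vavg nv \<omega> (\<lambda>k. y k e j)) i e j"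
  unfolding vavg_def satB_def by (simp add: sum_divide_distrib)


lemma vavg_cong: "(\<And>k. k \<in> {1..nv} \<Longrightarrow> f k = g k) \<Longrightarrow> vavg nv \<omega> f = vavg nv \<omega> g"
  unfolding vavg_def by (intro sum.cong refl) auto

lemma avg_zero:
  fixes \<rho> :: "nat \<Rightarrow> nat \<Rightarrow> nat \<Rightarrow> real" and g :: "nat \<Rightarrow> nat \<Rightarrow> nat \<Rightarrow> nat \<Rightarrow> real"
  assumes SBPt: "is_SBP nt tn pt Ht Qt"
    and w_sum: "(\<Sum>k=1..nv. \<omega> k) = 1"
    and w_mom: "(\<Sum>k=1..nv. \<omega> k * v k) = 0"
    and eps: "0 < \<epsilon>" and sig_s: "0 < \<sigma>s" and sig_a: "0 \<le> \<sigma>a"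
    and gb_avg: "\<forall>e<3. \<forall>j\<le>nx. vavg nv \<omega> (\<lambda>k. gb k e j) = 0"
    and geq: "\<forall>k\<in>{1..nv}. \<forall>i\<le>nt. \<forall>e<3. \<forall>j\<le>nx.
        Dt_op nt Ht Qt (g k) i e j
        + v k / \<epsilon> * Dx_op nx Hx Qx (g k) i e j
        - 1 / \<epsilon> * vavg nv \<omega> (\<lambda>k'. v k' * Dx_op nx Hx Qx (g k') i e j)
        + v k / \<epsilon>\<^sup>2 * Dx_op nx Hx Qx \<rho> i e j
        = - (\<sigma>s / \<epsilon>\<^sup>2 + \<sigma>a) * g k i e j
          - satB Ht (\<lambda>e j. tBT (g k) e j - gb k e j) i e j"
  shows "\<forall>i\<le>nt. \<forall>e<3. \<forall>j\<le>nx. vavg nv \<omega> (\<lambda>k. g k i e j) = 0"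
proof (intro allI impI)
  fix i0 e0 j0 assume i0: "i0 \<le> nt" and e0: "e0 < (3::nat)" and j0: "j0 \<le> nx"
  define c where "c = \<sigma>s / \<epsilon>\<^sup>2 + \<sigma>a"
  have cpos: "0 < c" unfolding c_def using eps sig_s sig_a by (simp add: add_pos_nonneg)
  define a where "a = (\<lambda>i e j. vavg nv \<omega> (\<lambda>k. g k i e j))"
  have vv: "vavg nv \<omega> v = 0" using w_mom unfolding vavg_def .
  have aeq: "Dt_op nt Ht Qt a i e j = - c * a i e j - satB Ht (\<lambda>e j. a 0 e j) i e j"
    if i: "i \<le> nt" and e: "e < 3" and j: "j \<le> nx" for i e j
  proof -
    have "vavg nv \<omega> (\<lambda>k. Dt_op nt Ht Qt (g k) i e j
        + v k / \<epsilon> * Dx_op nx Hx Qx (g k) i e j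
        - 1 / \<epsilon> * vavg nv \<omega> (\<lambda>k'. v k' * Dx_op nx Hx Qx (g k') i e j)
        + v k / \<epsilon>\<^sup>2 * Dx_op nx Hx Qx \<rho> i e j)
      = vavg nv \<omega> (\<lambda>k. - (\<sigma>s / \<epsilon>\<^sup>2 + \<sigma>a) * g k i e j
          - satB Ht (\<lambda>e j. tBT (g k) e j - gb k e j) i e j)"
      using geq i e j by (intro vavg_cong) blast
    then show ?thesis using vv w_sum gb_avg e j unfolding a_def c_def tBT_def
      by (simp only: vavg_add vavg_diff vavg_Dt vavg_divmult vavg_const vavg_cmult vavg_multconst vavg_satB) (simp add: satB_def)
  qed
  have "\<forall>i\<le>nt. a i e0 j0 = 0"
  proof (rule zero_lemma[OF SBPt cpos])
    show "\<forall>i\<le>nt. (\<Sum>i'\<le>nt. sbpD Ht Qt i i' * a i' e0 j0) = - c * a i e0 j0 - (if i = 0 then a 0 e0 j0 / Ht 0 0 else 0)"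
      using aeq e0 j0 unfolding Dt_op_def satB_def by auto
  qed
  then show "vavg nv \<omega> (\<lambda>k. g k i0 e0 j0) = 0" using i0 unfolding a_def by auto
qed


lemma sat_bound:
  assumes "\<forall>j\<le>nx. 0 < Hx j j"
  shows "SB nx Hx y / 2 - (\<Sum>e<3. \<Sum>j\<le>nx. Hx j j * (y e j * (y e j - z e j))) \<le> SB nx Hx z / 2"
proof -
  have "SB nx Hx z / 2 - (SB nx Hx y / 2 - (\<Sum>e<3. \<Sum>j\<le>nx. Hx j j * (y e j * (y e j - z e j))))
      = (\<Sum>e<3. \<Sum>j\<le>nx. Hx j j * (z e j)^2 / 2 - Hx j j * (y e j)^2 / 2 + Hx j j * (y e j * (y e j - z e j)))"
    unfolding SB_def by (simp add: sum_divide_distrib sum_subtractf sum.distrib)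
  also have "\<dots> = (\<Sum>e<3. \<Sum>j\<le>nx. Hx j j * (y e j - z e j)^2 / 2)"
    by (intro sum.cong refl) (simp add: power2_eq_square field_simps)
  also have "\<dots> \<ge> 0" using assms by (intro sum_nonneg) (simp add: less_imp_le)
  finally show ?thesis by simp
qed


lemma final_arith:
  fixes Rn R0 Rb P X a1 a2 eGn eG0 eGb eF :: real
  assumes "(Rn - R0) / 2 + X = - a1 - P" "eGn / 2 - eG0 / 2 = X - a2 - eF"
    "0 \<le> a1" "0 \<le> a2" "R0 / 2 - P \<le> Rb / 2" "eG0 / 2 - eF \<le> eGb / 2"
  shows "Rn / 2 + eGn / 2 \<le> Rb / 2 + eGb / 2"
proof -
  have "Rn / 2 + eGn / 2 = (R0 / 2 - P) + (eG0 / 2 - eF) - a1 - a2"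
    using assms(1,2) by (simp add: field_simps)
  then show ?thesis using assms(3-6) by linarith
qed

lemma scale_ineq:
  fixes e X Y Z :: real
  assumes "X / 2 - Y \<le> Z / 2"
  shows "e\<^sup>2 * X / 2 - e\<^sup>2 * Y \<le> e\<^sup>2 * Z / 2"
proof -
  have "e\<^sup>2 * (X / 2 - Y) \<le> e\<^sup>2 * (Z / 2)" using assms by (rule mult_left_mono) simp
  then show ?thesis by (simp add: algebra_simps)
qed

lemma slab_energy:
  fixes \<rho> :: "nat \<Rightarrow> nat \<Rightarrow> nat \<Rightarrow> real" and \<rho>b :: "nat \<Rightarrow> nat \<Rightarrow> real" and g :: "nat \<Rightarrow> nat \<Rightarrow> nat \<Rightarrow> nat \<Rightarrow> real"
  assumes SBPx: "is_SBP nx xn px Hx Qx"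
    and SBPt: "is_SBP nt tn pt Ht Qt"
    and w_pos: "\<forall>k\<in>{1..nv}. 0 < \<omega> k"
    and w_sum: "(\<Sum>k=1..nv. \<omega> k) = 1"
    and w_mom: "(\<Sum>k=1..nv. \<omega> k * v k) = 0"
    and eps: "0 < \<epsilon>" and sig_s: "0 < \<sigma>s" and sig_a: "0 \<le> \<sigma>a"
    and gb_avg: "\<forall>e<3. \<forall>j\<le>nx. vavg nv \<omega> (\<lambda>k. gb k e j) = 0"
    and rho: "\<forall>i\<le>nt. \<forall>e<3. \<forall>j\<le>nx.
        Dt_op nt Ht Qt \<rho> i e j
        + Dx_op nx Hx Qx (\<lambda>i e j. vavg nv \<omega> (\<lambda>k. v k * g k i e j)) i e j
        = - \<sigma>a * \<rho> i e j
          - satB Ht (\<lambda>e j. tBT \<rho> e j - \<rho>b e j) i e j"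
    and geq: "\<forall>k\<in>{1..nv}. \<forall>i\<le>nt. \<forall>e<3. \<forall>j\<le>nx.
        Dt_op nt Ht Qt (g k) i e j
        + v k / \<epsilon> * Dx_op nx Hx Qx (g k) i e j
        - 1 / \<epsilon> * vavg nv \<omega> (\<lambda>k'. v k' * Dx_op nx Hx Qx (g k') i e j)
        + v k / \<epsilon>\<^sup>2 * Dx_op nx Hx Qx \<rho> i e j
        = - (\<sigma>s / \<epsilon>\<^sup>2 + \<sigma>a) * g k i e j
          - satB Ht (\<lambda>e j. tBT (g k) e j - gb k e j) i e j"
  shows "1/2 * SB nx Hx (\<rho> nt) + \<epsilon>\<^sup>2 / 2 * vavg nv \<omega> (\<lambda>k. SB nx Hx (g k nt))
         \<le> 1/2 * SB nx Hx \<rho>b + \<epsilon>\<^sup>2 / 2 * vavg nv \<omega> (\<lambda>k. SB nx Hx (gb k))"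
proof -
  have Htp: "\<forall>i\<le>nt. 0 < Ht i i" using SBPt unfolding is_SBP_def by auto
  have Hxp: "\<forall>j\<le>nx. 0 < Hx j j" using SBPx unfolding is_SBP_def by auto
  have Ht0: "Ht 0 0 \<noteq> 0" using Htp by force
  have az: "\<forall>i\<le>nt. \<forall>e<3. \<forall>j\<le>nx. vavg nv \<omega> (\<lambda>k. g k i e j) = 0"
    by (rule avg_zero[OF SBPt w_sum w_mom eps sig_s sig_a gb_avg geq])
  define c where "c = \<sigma>s / \<epsilon>\<^sup>2 + \<sigma>a"
  have c0: "0 \<le> c" unfolding c_def using sig_s sig_a by simp
  define T where "T = TT nt nx Ht Hx"
  define w where "w = (\<lambda>i e j. vavg nv \<omega> (\<lambda>k. v k * g k i e j))"
  define V where "V = (\<lambda>i e j. vavg nv \<omega> (\<lambda>k'. v k' * Dx_op nx Hx Qx (g k') i e j))"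
  define sr where "sr = satB Ht (\<lambda>e j. tBT \<rho> e j - \<rho>b e j)"
  define sg where "sg = (\<lambda>k. satB Ht (\<lambda>e j. tBT (g k) e j - gb k e j))"
  define K where "K = {1..(nv::nat)}"
  define A where "A = (\<lambda>k. T (\<lambda>i e j. g k i e j * Dt_op nt Ht Qt (g k) i e j))"
  define Z where "Z = (\<lambda>k. T (\<lambda>i e j. g k i e j * Dx_op nx Hx Qx (g k) i e j))"
  define B where "B = (\<lambda>k. T (\<lambda>i e j. g k i e j * V i e j))"
  define C where "C = (\<lambda>k. T (\<lambda>i e j. g k i e j * Dx_op nx Hx Qx \<rho> i e j))"
  define D where "D = (\<lambda>k. T (\<lambda>i e j. g k i e j * g k i e j))"
  define F where "F = (\<lambda>k. T (\<lambda>i e j. g k i e j * sg k i e j))"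

  have Er: "T (\<lambda>i e j. \<rho> i e j * Dt_op nt Ht Qt \<rho> i e j) + T (\<lambda>i e j. \<rho> i e j * Dx_op nx Hx Qx w i e j)
        = - \<sigma>a * T (\<lambda>i e j. \<rho> i e j * \<rho> i e j) - T (\<lambda>i e j. \<rho> i e j * sr i e j)"
  proof -
    have "T (\<lambda>i e j. \<rho> i e j * Dt_op nt Ht Qt \<rho> i e j + \<rho> i e j * Dx_op nx Hx Qx w i e j)
        = T (\<lambda>i e j. - \<sigma>a * (\<rho> i e j * \<rho> i e j) - \<rho> i e j * sr i e j)"
      unfolding T_def
    proof (rule TT_cong, intro allI impI)
      fix i e j assume "i \<le> nt" "e < (3::nat)" "j \<le> nx"
      then have "Dt_op nt Ht Qt \<rho> i e j + Dx_op nx Hx Qx w i e j = - \<sigma>a * \<rho> i e j - sr i e j"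
        using rho unfolding w_def sr_def by blast
      then have "\<rho> i e j * (Dt_op nt Ht Qt \<rho> i e j + Dx_op nx Hx Qx w i e j) = \<rho> i e j * (- \<sigma>a * \<rho> i e j - sr i e j)"
        by simp
      then show "\<rho> i e j * Dt_op nt Ht Qt \<rho> i e j + \<rho> i e j * Dx_op nx Hx Qx w i e j = - \<sigma>a * (\<rho> i e j * \<rho> i e j) - \<rho> i e j * sr i e j"
        by (simp add: algebra_simps)
    qed
    then show ?thesis unfolding T_def by (simp only: TT_add TT_diff TT_cmult)
  qed

  have Eg: "A k + v k / \<epsilon> * Z k - 1 / \<epsilon> * B k + v k / \<epsilon>\<^sup>2 * C k = - c * D k - F k" if k: "k \<in> K" for k
  proof -
    have "T (\<lambda>i e j. g k i e j * Dt_op nt Ht Qt (g k) i e j + v k / \<epsilon> * (g k i e j * Dx_op nx Hx Qx (g k) i e j)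
          - 1 / \<epsilon> * (g k i e j * V i e j) + v k / \<epsilon>\<^sup>2 * (g k i e j * Dx_op nx Hx Qx \<rho> i e j))
        = T (\<lambda>i e j. - c * (g k i e j * g k i e j) - g k i e j * sg k i e j)"
      unfolding T_def
    proof (rule TT_cong, intro allI impI)
      fix i e j assume "i \<le> nt" "e < (3::nat)" "j \<le> nx"
      then have "Dt_op nt Ht Qt (g k) i e j + v k / \<epsilon> * Dx_op nx Hx Qx (g k) i e j - 1 / \<epsilon> * V i e j
          + v k / \<epsilon>\<^sup>2 * Dx_op nx Hx Qx \<rho> i e j = - c * g k i e j - sg k i e j"
        using geq k unfolding V_def sg_def c_def K_def by blast
      then have "g k i e j * (Dt_op nt Ht Qt (g k) i e j + v k / \<epsilon> * Dx_op nx Hx Qx (g k) i e j - 1 / \<epsilon> * V i e j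
          + v k / \<epsilon>\<^sup>2 * Dx_op nx Hx Qx \<rho> i e j) = g k i e j * (- c * g k i e j - sg k i e j)"
        by simp
      then show "g k i e j * Dt_op nt Ht Qt (g k) i e j + v k / \<epsilon> * (g k i e j * Dx_op nx Hx Qx (g k) i e j)
          - 1 / \<epsilon> * (g k i e j * V i e j) + v k / \<epsilon>\<^sup>2 * (g k i e j * Dx_op nx Hx Qx \<rho> i e j)
          = - c * (g k i e j * g k i e j) - g k i e j * sg k i e j"
        by (simp add: algebra_simps)
    qed
    then show ?thesis unfolding T_def A_def Z_def B_def C_def D_def F_def
      by (simp only: TT_add TT_diff TT_cmult)
  qed

  have Z0: "Z k = 0" for k
    using TT_space[OF SBPx, of nt Ht "g k" "g k"] unfolding Z_def T_def by simp
  have epsn: "\<epsilon> \<noteq> 0" using eps by simp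
  have Eg': "\<epsilon>\<^sup>2 * (\<omega> k * A k) = \<epsilon> * (\<omega> k * B k) - \<omega> k * v k * C k - \<epsilon>\<^sup>2 * c * (\<omega> k * D k) - \<epsilon>\<^sup>2 * (\<omega> k * F k)"
    if k: "k \<in> K" for k
  proof -
    have "A k = 1 / \<epsilon> * B k - v k / \<epsilon>\<^sup>2 * C k - c * D k - F k"
      using Eg[OF k] unfolding Z0 by linarith
    then have "\<epsilon>\<^sup>2 * A k = \<epsilon> * B k - v k * C k - \<epsilon>\<^sup>2 * c * D k - \<epsilon>\<^sup>2 * F k"
      using epsn by (simp add: field_simps power2_eq_square)
    then have "\<omega> k * (\<epsilon>\<^sup>2 * A k) = \<omega> k * (\<epsilon> * B k - v k * C k - \<epsilon>\<^sup>2 * c * D k - \<epsilon>\<^sup>2 * F k)"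
      by simp
    then show ?thesis by (simp add: algebra_simps)
  qed
  have S1: "\<epsilon>\<^sup>2 * (\<Sum>k\<in>K. \<omega> k * A k) = \<epsilon> * (\<Sum>k\<in>K. \<omega> k * B k) - (\<Sum>k\<in>K. \<omega> k * v k * C k)
      - \<epsilon>\<^sup>2 * c * (\<Sum>k\<in>K. \<omega> k * D k) - \<epsilon>\<^sup>2 * (\<Sum>k\<in>K. \<omega> k * F k)"
  proof -
    have "(\<Sum>k\<in>K. \<epsilon>\<^sup>2 * (\<omega> k * A k)) = (\<Sum>k\<in>K. \<epsilon> * (\<omega> k * B k) - \<omega> k * v k * C k - \<epsilon>\<^sup>2 * c * (\<omega> k * D k) - \<epsilon>\<^sup>2 * (\<omega> k * F k))"
      using Eg' by (intro sum.cong refl)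
    then show ?thesis by (simp add: sum_subtractf sum_distrib_left)
  qed
  have finK: "finite K" unfolding K_def by simp
  have SBz: "(\<Sum>k\<in>K. \<omega> k * B k) = 0"
  proof -
    have "(\<Sum>k\<in>K. \<omega> k * B k) = (\<Sum>k\<in>K. T (\<lambda>i e j. \<omega> k * (g k i e j * V i e j)))"
      unfolding B_def T_def by (simp only: TT_cmult)
    also have "\<dots> = T (\<lambda>i e j. \<Sum>k\<in>K. \<omega> k * (g k i e j * V i e j))"
      unfolding T_def by (rule TT_sum[OF finK, symmetric])
    also have "\<dots> = T (\<lambda>i e j. 0)"
      unfolding T_def
    proof (rule TT_cong, intro allI impI)
      fix i e j assume "i \<le> nt" "e < (3::nat)" "j \<le> nx"
      then have "vavg nv \<omega> (\<lambda>k. g k i e j) = 0" using az by blast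
      then have z: "(\<Sum>k\<in>K. \<omega> k * g k i e j) = 0" unfolding vavg_def K_def by simp
      have "(\<Sum>k\<in>K. \<omega> k * (g k i e j * V i e j)) = (\<Sum>k\<in>K. \<omega> k * g k i e j) * V i e j"
        by (simp add: sum_distrib_right mult.assoc)
      then show "(\<Sum>k\<in>K. \<omega> k * (g k i e j * V i e j)) = 0" unfolding z by simp
    qed
    also have "\<dots> = 0" unfolding T_def by (rule TT_zero)
    finally show ?thesis .
  qed
  have SC: "(\<Sum>k\<in>K. \<omega> k * v k * C k) = T (\<lambda>i e j. w i e j * Dx_op nx Hx Qx \<rho> i e j)"
  proof -
    have "(\<Sum>k\<in>K. \<omega> k * v k * C k) = (\<Sum>k\<in>K. T (\<lambda>i e j. \<omega> k * v k * (g k i e j * Dx_op nx Hx Qx \<rho> i e j)))"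
      unfolding C_def T_def by (simp only: TT_cmult)
    also have "\<dots> = T (\<lambda>i e j. \<Sum>k\<in>K. \<omega> k * v k * (g k i e j * Dx_op nx Hx Qx \<rho> i e j))"
      unfolding T_def by (rule TT_sum[OF finK, symmetric])
    also have "\<dots> = T (\<lambda>i e j. w i e j * Dx_op nx Hx Qx \<rho> i e j)"
      unfolding T_def
    proof (rule TT_cong, intro allI impI)
      fix i e j
      show "(\<Sum>k\<in>K. \<omega> k * v k * (g k i e j * Dx_op nx Hx Qx \<rho> i e j)) = w i e j * Dx_op nx Hx Qx \<rho> i e j"
        unfolding w_def vavg_def K_def sum_distrib_right by (simp add: mult_ac)
    qed
    finally show ?thesis .
  qed
  have SA: "(\<Sum>k\<in>K. \<omega> k * A k) = (\<Sum>k\<in>K. \<omega> k * SB nx Hx (g k nt)) / 2 - (\<Sum>k\<in>K. \<omega> k * SB nx Hx (g k 0)) / 2"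
  proof -
    have "(\<Sum>k\<in>K. \<omega> k * A k) = (\<Sum>k\<in>K. \<omega> k * SB nx Hx (g k nt) / 2 - \<omega> k * SB nx Hx (g k 0) / 2)"
      unfolding A_def T_def TT_time[OF SBPt] by (intro sum.cong refl) (simp add: field_simps)
    then show ?thesis by (simp add: sum_subtractf sum_divide_distrib)
  qed
  define FF where "FF = (\<lambda>k. \<Sum>e<3. \<Sum>j\<le>nx. Hx j j * (g k 0 e j * (g k 0 e j - gb k e j)))"
  have FFk: "F k = FF k" for k
    unfolding F_def FF_def T_def sg_def tBT_def by (rule TT_sat[where Ht = Ht, OF Ht0])
  define P where "P = (\<Sum>e<3. \<Sum>j\<le>nx. Hx j j * (\<rho> 0 e j * (\<rho> 0 e j - \<rho>b e j)))"
  have Rs: "T (\<lambda>i e j. \<rho> i e j * sr i e j) = P"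
    unfolding P_def T_def sr_def tBT_def by (rule TT_sat[where Ht = Ht, OF Ht0])
  have Rt: "T (\<lambda>i e j. \<rho> i e j * Dt_op nt Ht Qt \<rho> i e j) = (SB nx Hx (\<rho> nt) - SB nx Hx (\<rho> 0)) / 2"
    unfolding T_def by (rule TT_time[OF SBPt])
  have Xs: "T (\<lambda>i e j. w i e j * Dx_op nx Hx Qx \<rho> i e j) = - T (\<lambda>i e j. \<rho> i e j * Dx_op nx Hx Qx w i e j)"
    using TT_space[OF SBPx, of nt Ht \<rho> w] unfolding T_def by simp
  have nn1: "0 \<le> \<sigma>a * T (\<lambda>i e j. \<rho> i e j * \<rho> i e j)"
    using sig_a TT_nonneg[where Ht=Ht and Hx=Hx and nt=nt and nx=nx, OF Htp Hxp, of "\<lambda>i e j. \<rho> i e j * \<rho> i e j"] unfolding T_def by simp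
  have Dnn: "0 \<le> D k" for k
    using TT_nonneg[where Ht=Ht and Hx=Hx and nt=nt and nx=nx, OF Htp Hxp, of "\<lambda>i e j. g k i e j * g k i e j"] unfolding D_def T_def by simp
  have nn2: "0 \<le> \<epsilon>\<^sup>2 * c * (\<Sum>k\<in>K. \<omega> k * D k)"
    using c0 Dnn w_pos unfolding K_def by (intro mult_nonneg_nonneg sum_nonneg) (auto simp: less_imp_le)
  have b1: "SB nx Hx (\<rho> 0) / 2 - P \<le> SB nx Hx \<rho>b / 2"
    unfolding P_def by (rule sat_bound[where Hx=Hx and nx=nx, OF Hxp])
  have b2: "(\<Sum>k\<in>K. \<omega> k * (SB nx Hx (g k 0) / 2 - FF k)) \<le> (\<Sum>k\<in>K. \<omega> k * (SB nx Hx (gb k) / 2))"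
  proof (rule sum_mono)
    fix k assume "k \<in> K"
    then have "0 \<le> \<omega> k" using w_pos unfolding K_def by (auto simp: less_imp_le)
    moreover have "SB nx Hx (g k 0) / 2 - FF k \<le> SB nx Hx (gb k) / 2"
      unfolding FF_def by (rule sat_bound[where Hx=Hx and nx=nx, OF Hxp])
    ultimately show "\<omega> k * (SB nx Hx (g k 0) / 2 - FF k) \<le> \<omega> k * (SB nx Hx (gb k) / 2)"
      by (rule mult_left_mono[rotated])
  qed
  have L1: "(\<Sum>k\<in>K. \<omega> k * (SB nx Hx (g k 0) / 2 - FF k)) = (\<Sum>k\<in>K. \<omega> k * SB nx Hx (g k 0)) / 2 - (\<Sum>k\<in>K. \<omega> k * FF k)"
  proof -
    have "(\<Sum>k\<in>K. \<omega> k * (SB nx Hx (g k 0) / 2 - FF k)) = (\<Sum>k\<in>K. \<omega> k * SB nx Hx (g k 0) / 2 - \<omega> k * FF k)"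
      by (intro sum.cong refl) (simp add: right_diff_distrib)
    then show ?thesis by (simp add: sum_subtractf sum_divide_distrib)
  qed
  have L2: "(\<Sum>k\<in>K. \<omega> k * (SB nx Hx (gb k) / 2)) = (\<Sum>k\<in>K. \<omega> k * SB nx Hx (gb k)) / 2"
    by (simp add: sum_divide_distrib)
  have b2': "\<epsilon>\<^sup>2 * (\<Sum>k\<in>K. \<omega> k * SB nx Hx (g k 0)) / 2 - \<epsilon>\<^sup>2 * (\<Sum>k\<in>K. \<omega> k * FF k) \<le> \<epsilon>\<^sup>2 * (\<Sum>k\<in>K. \<omega> k * SB nx Hx (gb k)) / 2"
    by (rule scale_ineq) (use b2 in \<open>simp only: L1 L2\<close>)
  have fa: "SB nx Hx (\<rho> nt) / 2 + \<epsilon>\<^sup>2 * (\<Sum>k\<in>K. \<omega> k * SB nx Hx (g k nt)) / 2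
      \<le> SB nx Hx \<rho>b / 2 + \<epsilon>\<^sup>2 * (\<Sum>k\<in>K. \<omega> k * SB nx Hx (gb k)) / 2"
  proof (rule final_arith[where X = "T (\<lambda>i e j. \<rho> i e j * Dx_op nx Hx Qx w i e j)"])
    show "(SB nx Hx (\<rho> nt) - SB nx Hx (\<rho> 0)) / 2 + T (\<lambda>i e j. \<rho> i e j * Dx_op nx Hx Qx w i e j)
        = - (\<sigma>a * T (\<lambda>i e j. \<rho> i e j * \<rho> i e j)) - P"
      using Er unfolding Rt Rs by simp
    show "\<epsilon>\<^sup>2 * (\<Sum>k\<in>K. \<omega> k * SB nx Hx (g k nt)) / 2 - \<epsilon>\<^sup>2 * (\<Sum>k\<in>K. \<omega> k * SB nx Hx (g k 0)) / 2
        = T (\<lambda>i e j. \<rho> i e j * Dx_op nx Hx Qx w i e j) - \<epsilon>\<^sup>2 * c * (\<Sum>k\<in>K. \<omega> k * D k) - \<epsilon>\<^sup>2 * (\<Sum>k\<in>K. \<omega> k * FF k)"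
      using S1 unfolding SBz SC SA Xs FFk by (simp add: field_simps)
  qed (rule nn1, rule nn2, rule b1, rule b2')
  then show ?thesis unfolding vavg_def K_def by (simp add: field_simps)
qed

lemma quadM_SB:
  assumes S: "is_SBP nx xn px Hx Qx"
  shows "quadM nx Hx i0 u = SB nx Hx (u i0)"
proof -
  have off: "\<And>i j. i \<le> nx \<Longrightarrow> j \<le> nx \<Longrightarrow> i \<noteq> j \<Longrightarrow> Hx i j = 0" using S unfolding is_SBP_def by auto
  have "(\<Sum>j'\<le>nx. u i0 e j * Hx j j' * u i0 e j') = Hx j j * (u i0 e j)^2" if j: "j \<le> nx" for e j
  proof -
    have "(\<Sum>j'\<le>nx. u i0 e j * Hx j j' * u i0 e j') = (\<Sum>j'\<le>nx. if j' = j then Hx j j * (u i0 e j)^2 else 0)"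
      using j off by (intro sum.cong refl) (auto simp: power2_eq_square)
    then show ?thesis using j by simp
  qed
  then show ?thesis unfolding quadM_def SB_def by simp
qed

lemma tBT_eq: "tBT u = u 0" by (rule ext)+ (simp add: tBT_def)
lemma tTT_eq: "tTT nt u = u nt" by (rule ext)+ (simp add: tTT_def)

theorem theorem3p11:
  fixes nx nt nv px pt :: nat
    and xn tn :: "nat \<Rightarrow> real"
    and Hx Qx Ht Qt :: "nat \<Rightarrow> nat \<Rightarrow> real"
    and v \<omega> :: "nat \<Rightarrow> real"
    and \<epsilon> \<sigma>s \<sigma>a :: real
    and \<rho>1 \<rho>2 \<rho>10 :: "nat \<Rightarrow> nat \<Rightarrow> nat \<Rightarrow> real"
    and g1 g2 g10 :: "nat \<Rightarrow> nat \<Rightarrow> nat \<Rightarrow> nat \<Rightarrow> real"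
  assumes SBPx: "is_SBP nx xn px Hx Qx"
    and SBPt: "is_SBP nt tn pt Ht Qt"
    and w_pos: "\<forall>k\<in>{1..nv}. 0 < \<omega> k"
    and w_sum: "(\<Sum>k=1..nv. \<omega> k) = 1"
    and w_mom: "(\<Sum>k=1..nv. \<omega> k * v k) = 0"
    and eps: "0 < \<epsilon>" and sig_s: "0 < \<sigma>s" and sig_a: "0 \<le> \<sigma>a"
    and init_avg: "\<forall>i\<le>nt. \<forall>e<3. \<forall>j\<le>nx. vavg nv \<omega> (\<lambda>k. g10 k i e j) = 0"
    and rhoI: "\<forall>i\<le>nt. \<forall>e<3. \<forall>j\<le>nx.
        Dt_op nt Ht Qt \<rho>1 i e j
        + Dx_op nx Hx Qx (\<lambda>i e j. vavg nv \<omega> (\<lambda>k. v k * g1 k i e j)) i e j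
        = - \<sigma>a * \<rho>1 i e j
          - satB Ht (\<lambda>e j. tBT \<rho>1 e j - tBT \<rho>10 e j) i e j"
    and gI: "\<forall>k\<in>{1..nv}. \<forall>i\<le>nt. \<forall>e<3. \<forall>j\<le>nx.
        Dt_op nt Ht Qt (g1 k) i e j
        + v k / \<epsilon> * Dx_op nx Hx Qx (g1 k) i e j
        - 1 / \<epsilon> * vavg nv \<omega> (\<lambda>k'. v k' * Dx_op nx Hx Qx (g1 k') i e j)
        + v k / \<epsilon>\<^sup>2 * Dx_op nx Hx Qx \<rho>1 i e j
        = - (\<sigma>s / \<epsilon>\<^sup>2 + \<sigma>a) * g1 k i e j
          - satB Ht (\<lambda>e j. tBT (g1 k) e j - tBT (g10 k) e j) i e j"
    and rhoII: "\<forall>i\<le>nt. \<forall>e<3. \<forall>j\<le>nx.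
        Dt_op nt Ht Qt \<rho>2 i e j
        + Dx_op nx Hx Qx (\<lambda>i e j. vavg nv \<omega> (\<lambda>k. v k * g2 k i e j)) i e j
        = - \<sigma>a * \<rho>2 i e j
          - satB Ht (\<lambda>e j. tBT \<rho>2 e j - tTT nt \<rho>1 e j) i e j"
    and gII: "\<forall>k\<in>{1..nv}. \<forall>i\<le>nt. \<forall>e<3. \<forall>j\<le>nx.
        Dt_op nt Ht Qt (g2 k) i e j
        + v k / \<epsilon> * Dx_op nx Hx Qx (g2 k) i e j
        - 1 / \<epsilon> * vavg nv \<omega> (\<lambda>k'. v k' * Dx_op nx Hx Qx (g2 k') i e j)
        + v k / \<epsilon>\<^sup>2 * Dx_op nx Hx Qx \<rho>2 i e j
        = - (\<sigma>s / \<epsilon>\<^sup>2 + \<sigma>a) * g2 k i e j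
          - satB Ht (\<lambda>e j. tBT (g2 k) e j - tTT nt (g1 k) e j) i e j"
  shows "1/2 * quadM nx Hx nt \<rho>2 + \<epsilon>\<^sup>2 / 2 * vavg nv \<omega> (\<lambda>k. quadM nx Hx nt (g2 k))
         \<le> 1/2 * quadM nx Hx 0 \<rho>10 + \<epsilon>\<^sup>2 / 2 * vavg nv \<omega> (\<lambda>k. quadM nx Hx 0 (g10 k))"
proof -
  have gb1: "\<forall>e<3. \<forall>j\<le>nx. vavg nv \<omega> (\<lambda>k. tBT (g10 k) e j) = 0"
    using init_avg unfolding tBT_def by simp
  have az1: "\<forall>i\<le>nt. \<forall>e<3. \<forall>j\<le>nx. vavg nv \<omega> (\<lambda>k. g1 k i e j) = 0"
    by (rule avg_zero[where gb = "\<lambda>k. tBT (g10 k)", OF SBPt w_sum w_mom eps sig_s sig_a gb1 gI])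
  note E1 = slab_energy[where gb = "\<lambda>k. tBT (g10 k)" and \<rho>b = "tBT \<rho>10", OF SBPx SBPt w_pos w_sum w_mom eps sig_s sig_a gb1 rhoI gI]
  have gb2: "\<forall>e<3. \<forall>j\<le>nx. vavg nv \<omega> (\<lambda>k. tTT nt (g1 k) e j) = 0"
    using az1 unfolding tTT_def by simp
  note E2 = slab_energy[where gb = "\<lambda>k. tTT nt (g1 k)" and \<rho>b = "tTT nt \<rho>1", OF SBPx SBPt w_pos w_sum w_mom eps sig_s sig_a gb2 rhoII gII]
  show ?thesis
    using E1 E2 unfolding quadM_SB[OF SBPx] tBT_eq tTT_eq by linarith
qed

end
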